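(* Let $G=G_1\cup G_2$, where $G_1\cap G_2$ is a clique. If both $G_1$ and $G_2$ have clique-based $\infty$-admissibility at most $t$, then $G$ has clique-based $\infty$-admissibility at most $t$ as well.
   Context: All graphs are finite and simple. Given an ordering $v_1,\ldots,v_n$ of $V(G)$, the $\infty$-backconnectivity of $v_k$ is the maximum number of paths (of any length) from $v_k$ to $\{v_1,\ldots,v_{k-1}\}$ that pairwise intersect only in $v_k$; the $\infty$-admissibility of the ordering is the maximum $\infty$-backconnectivity over its vertices. For $X\subseteq V(G)$, $G$ has $X$-based $\infty$-admissibility at most $t$ if there is an ordering $v_1,\ldots,v_n$ of $V(G)$ with $\infty$-admissibility at most $t$ and $X=\{v_1,\ldots,v_{|X|}\}$. $G$ has clique-based $\infty$-admissibility at most $t$ if it has $X$-based $\infty$-admissibility at most $t$ for every $X\subseteq V(G)$ inducing a clique in $G$. *)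

theory Defs
  imports Main
begin

definition simple_graph :: "'a set \<Rightarrow> ('a \<times> 'a) set \<Rightarrow> bool" where
  "simple_graph V E \<longleftrightarrow> finite V \<and> E \<subseteq> V \<times> V \<and> sym E \<and> irrefl E"

definition path_to_set :: "'a set \<Rightarrow> ('a \<times> 'a) set \<Rightarrow> 'a \<Rightarrow> 'a set \<Rightarrow> 'a list \<Rightarrow> bool" where
  "path_to_set V E v S p \<longleftrightarrow>
     p \<noteq> [] \<and> hd p = v \<and> distinct p \<and> set p \<subseteq> V \<and>
     (\<forall>i < length p - 1. (p ! i, p ! Suc i) \<in> E) \<and>
     last p \<in> S \<and> (\<forall>x \<in> set (butlast p). x \<notin> S)"

definition internally_disjoint_family ::
  "'a set \<Rightarrow> ('a \<times> 'a) set \<Rightarrow> 'a \<Rightarrow> 'a set \<Rightarrow> 'a list set \<Rightarrow> bool" where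
  "internally_disjoint_family V E v S P \<longleftrightarrow>
     (\<forall>p \<in> P. path_to_set V E v S p) \<and>
     (\<forall>p \<in> P. \<forall>q \<in> P. p \<noteq> q \<longrightarrow> set p \<inter> set q = {v})"

text \<open>The \<infinity>-backconnectivity of the k-th vertex (0-indexed) of the ordering xs.\<close>

definition backconn :: "'a set \<Rightarrow> ('a \<times> 'a) set \<Rightarrow> 'a list \<Rightarrow> nat \<Rightarrow> nat" where
  "backconn V E xs k =
     Max {card P | P. internally_disjoint_family V E (xs ! k) (set (take k xs)) P}"

definition is_ordering :: "'a set \<Rightarrow> 'a list \<Rightarrow> bool" where
  "is_ordering V xs \<longleftrightarrow> distinct xs \<and> set xs = V"

definition inf_adm_le :: "'a set \<Rightarrow> ('a \<times> 'a) set \<Rightarrow> 'a list \<Rightarrow> nat \<Rightarrow> bool" where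
  "inf_adm_le V E xs t \<longleftrightarrow> (\<forall>k < length xs. backconn V E xs k \<le> t)"

definition based_inf_adm_le :: "'a set \<Rightarrow> ('a \<times> 'a) set \<Rightarrow> 'a set \<Rightarrow> nat \<Rightarrow> bool" where
  "based_inf_adm_le V E X t \<longleftrightarrow>
     (\<exists>xs. is_ordering V xs \<and> inf_adm_le V E xs t \<and> X = set (take (card X) xs))"

definition is_clique :: "('a \<times> 'a) set \<Rightarrow> 'a set \<Rightarrow> bool" where
  "is_clique E X \<longleftrightarrow> (\<forall>u \<in> X. \<forall>w \<in> X. u \<noteq> w \<longrightarrow> (u, w) \<in> E)"

definition clique_based_inf_adm_le :: "'a set \<Rightarrow> ('a \<times> 'a) set \<Rightarrow> nat \<Rightarrow> bool" where
  "clique_based_inf_adm_le V E t \<longleftrightarrow>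
     (\<forall>X. X \<subseteq> V \<longrightarrow> is_clique E X \<longrightarrow> based_inf_adm_le V E X t)"

end

theory Submission imports Defs begin

lemma path_succ: "(\<forall>i < length p - 1. (p ! i, p ! Suc i) \<in> E) \<longleftrightarrow> successively (\<lambda>x y. (x,y)\<in>E) p"
  unfolding successively_conv_nth by (metis Suc_eq_plus1 less_diff_conv)

lemma path_to_set_alt: "path_to_set V E v S p \<longleftrightarrow>
     p \<noteq> [] \<and> hd p = v \<and> distinct p \<and> set p \<subseteq> V \<and>
     successively (\<lambda>x y. (x,y)\<in>E) p \<and>
     last p \<in> S \<and> (\<forall>x \<in> set (butlast p). x \<notin> S)"
  unfolding path_to_set_def path_succ ..

lemma finite_cards:
  assumes "finite V"
  shows "finite {card P |P. internally_disjoint_family V E v S P}"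
proof -
  have "{card P |P. internally_disjoint_family V E v S P} \<subseteq> card ` Pow {xs. set xs \<subseteq> V \<and> distinct xs}"
  proof (rule subsetI)
    fix n assume "n \<in> {card P |P. internally_disjoint_family V E v S P}"
    then obtain P where n: "n = card P" and P: "internally_disjoint_family V E v S P" by blast
    have "P \<subseteq> {xs. set xs \<subseteq> V \<and> distinct xs}"
    proof
      fix p assume "p \<in> P"
      hence "path_to_set V E v S p" using P unfolding internally_disjoint_family_def by blast
      thus "p \<in> {xs. set xs \<subseteq> V \<and> distinct xs}" unfolding path_to_set_def by simp
    qed
    thus "n \<in> card ` Pow {xs. set xs \<subseteq> V \<and> distinct xs}" using n by blast
  qed
  moreover have "finite (card ` Pow {xs. set xs \<subseteq> V \<and> distinct xs})"
    using finite_subset_distinct[OF assms] by simp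
  ultimately show ?thesis by (rule finite_subset)
qed

lemma zero_in_cards: "0 \<in> {card P |P. internally_disjoint_family V E v S P}"
proof -
  have "internally_disjoint_family V E v S {}" unfolding internally_disjoint_family_def by simp
  thus ?thesis by force
qed

lemma bc_le:
  assumes "finite V" "finite V'" "v \<notin> S'"
    and tr: "\<And>p. path_to_set V E v S p \<Longrightarrow> \<exists>p'. path_to_set V' E' v S' p' \<and> set p' \<subseteq> set p"
  shows "Max {card P |P. internally_disjoint_family V E v S P}
         \<le> Max {card P |P. internally_disjoint_family V' E' v S' P}"
proof (rule Max.boundedI)
  show "finite {card P |P. internally_disjoint_family V E v S P}" using finite_cards[OF assms(1)] .
  show "{card P |P. internally_disjoint_family V E v S P} \<noteq> {}"
  proof
    assume "{card P |P. internally_disjoint_family V E v S P} = {}"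
    thus False using zero_in_cards[of V E v S] by simp
  qed
  fix n assume "n \<in> {card P |P. internally_disjoint_family V E v S P}"
  then obtain P where n: "n = card P" and P: "internally_disjoint_family V E v S P" by blast
  define f where "f p = (SOME p'. path_to_set V' E' v S' p' \<and> set p' \<subseteq> set p)" for p
  have f: "path_to_set V' E' v S' (f p) \<and> set (f p) \<subseteq> set p" if "p \<in> P" for p
    unfolding f_def apply (rule someI_ex) apply (rule tr)
    using P that unfolding internally_disjoint_family_def by blast
  have hv: "v \<in> set (f p)" "\<exists>y \<in> set (f p). y \<noteq> v" if "p \<in> P" for p
  proof -
    from f[OF that] have "path_to_set V' E' v S' (f p)" by blast
    hence ne: "f p \<noteq> []" and hd: "hd (f p) = v" and la: "last (f p) \<in> S'"
      unfolding path_to_set_def by simp_all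
    show "v \<in> set (f p)" using hd_in_set[OF ne] hd by simp
    show "\<exists>y \<in> set (f p). y \<noteq> v" using last_in_set[OF ne] la assms(3) by metis
  qed
  have inj: "inj_on f P"
  proof (rule inj_onI)
    fix p q assume pq: "p \<in> P" "q \<in> P" "f p = f q"
    show "p = q"
    proof (rule ccontr)
      assume "p \<noteq> q"
      hence "set p \<inter> set q = {v}" using P pq unfolding internally_disjoint_family_def by blast
      hence "set (f p) \<subseteq> {v}" using f pq by (metis le_inf_iff)
      thus False using hv(2)[OF pq(1)] by blast
    qed
  qed
  have "internally_disjoint_family V' E' v S' (f ` P)"
    unfolding internally_disjoint_family_def
  proof (intro conjI ballI impI)
    fix x assume "x \<in> f ` P" thus "path_to_set V' E' v S' x" using f by blast
  next
    fix x y assume "x \<in> f ` P" "y \<in> f ` P" "x \<noteq> y"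
    then obtain p q where pq: "p \<in> P" "q \<in> P" "x = f p" "y = f q" by blast
    with \<open>x \<noteq> y\<close> have "p \<noteq> q" by blast
    hence "set p \<inter> set q = {v}" using P pq unfolding internally_disjoint_family_def by blast
    thus "set x \<inter> set y = {v}" using f[OF pq(1)] f[OF pq(2)] hv(1)[OF pq(1)] hv(1)[OF pq(2)] pq by blast
  qed
  hence m: "card (f ` P) \<in> {card P |P. internally_disjoint_family V' E' v S' P}" by blast
  have eq: "card (f ` P) = n" using card_image[OF inj] n by simp
  have "card (f ` P) \<le> Max {card P |P. internally_disjoint_family V' E' v S' P}"
    by (rule Max_ge[OF finite_cards[OF assms(2)] m])
  thus "n \<le> Max {card P |P. internally_disjoint_family V' E' v S' P}" using eq by simp
qed


lemma clE: "is_clique (E1 \<inter> E2) (V1 \<inter> V2) \<Longrightarrow> a \<in> V1 \<Longrightarrow> a \<in> V2 \<Longrightarrow> b \<in> V1 \<Longrightarrow> b \<in> V2 \<Longrightarrow> a \<noteq> b \<Longrightarrow> (a,b) \<in> E1 \<and> (a,b) \<in> E2"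
  unfolding is_clique_def by blast

lemma filt:
  assumes E1: "E1 \<subseteq> V1 \<times> V1" and E2: "E2 \<subseteq> V2 \<times> V2" and cl: "is_clique (E1 \<inter> E2) (V1 \<inter> V2)"
  shows "successively (\<lambda>x y. (x,y) \<in> E1 \<union> E2) p \<Longrightarrow> distinct p \<Longrightarrow> p \<noteq> [] \<Longrightarrow> last p \<in> V1 \<Longrightarrow>
    successively (\<lambda>x y. (x,y)\<in>E1) (filter (\<lambda>x. x\<in>V1) p) \<and> filter (\<lambda>x. x\<in>V1) p \<noteq> [] \<and>
    (hd p \<notin> V1 \<longrightarrow> hd (filter (\<lambda>x. x\<in>V1) p) \<in> V2)"
proof (induction p)
  case Nil thus ?case by simp
next
  case (Cons a rest)
  show ?case
  proof (cases "rest = []")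
    case True thus ?thesis using Cons.prems by simp
  next
    case False
    then obtain b rest' where r: "rest = b # rest'" by (cases rest) auto
    have ab: "(a, b) \<in> E1 \<union> E2" using Cons.prems r by simp
    have IH: "successively (\<lambda>x y. (x,y)\<in>E1) (filter (\<lambda>x. x\<in>V1) rest) \<and> filter (\<lambda>x. x\<in>V1) rest \<noteq> [] \<and>
    (hd rest \<notin> V1 \<longrightarrow> hd (filter (\<lambda>x. x\<in>V1) rest) \<in> V2)"
      apply (rule Cons.IH) using Cons.prems r by auto
    then obtain h fr where fr: "filter (\<lambda>x. x\<in>V1) rest = h # fr" by (cases "filter (\<lambda>x. x\<in>V1) rest") auto
    have hf: "h \<in> set (filter (\<lambda>x. x\<in>V1) rest)" using fr by simp
    hence hV1: "h \<in> V1" and hrest: "h \<in> set rest" by simp_all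
    have hne: "h \<noteq> a" using Cons.prems(2) hrest by auto
    have hV2: "b \<notin> V1 \<Longrightarrow> h \<in> V2" using IH ab r fr by simp
    show ?thesis
    proof (cases "a \<in> V1")
      case True
      have "(a, h) \<in> E1"
      proof (cases "b \<in> V1")
        case True
        hence "h = b" using fr r by simp
        moreover have "(a,b) \<in> E1"
        proof -
          { assume "(a,b) \<in> E2" hence "a \<in> V2" "b \<in> V2" using E2 by auto
            hence "(a,b) \<in> E1" using clE[OF cl \<open>a\<in>V1\<close> _ \<open>b\<in>V1\<close>] hne \<open>h = b\<close> by auto }
          thus ?thesis using ab by blast
        qed
        ultimately show ?thesis by simp
      next
        case False
        hence "(a,b) \<in> E2" using ab E1 by blast
        hence "a \<in> V2" using E2 by blast
        thus ?thesis using clE[OF cl \<open>a\<in>V1\<close> _ hV1 hV2[OF False]] hne by auto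
      qed
      thus ?thesis using True IH fr by simp
    next
      case False
      have "h \<in> V2"
      proof (cases "b \<in> V1")
        case True
        hence "h = b" using fr r by simp
        have "(a,b) \<in> E2" using ab E1 False by blast
        thus ?thesis using E2 \<open>h = b\<close> by blast
      qed (use hV2 in blast)
      thus ?thesis using False IH fr by simp
    qed
  qed
qed

lemma succ_E2:
  assumes E1: "E1 \<subseteq> V1 \<times> V1"
  shows "successively (\<lambda>x y. (x,y) \<in> E1 \<union> E2) p \<Longrightarrow> (\<forall>x\<in>set (butlast p). x \<notin> V1) \<Longrightarrow>
    successively (\<lambda>x y. (x,y) \<in> E2) p"
proof (induction p rule: induct_list012)
  case (3 x y xs)
  thus ?case using E1 by auto
qed auto

lemma succ_set:
  assumes E2: "E2 \<subseteq> V2 \<times> V2"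
  shows "successively (\<lambda>x y. (x,y) \<in> E2) (x # y # p) \<Longrightarrow> set (x # y # p) \<subseteq> V2"
proof (induction p arbitrary: x y)
  case Nil thus ?case using E2 by auto
next
  case (Cons a p) thus ?case using E2 by auto
qed

lemma nth_notin_take: assumes "distinct xs" "k < length xs" shows "xs ! k \<notin> set (take k xs)"
proof
  assume "xs!k \<in> set (take k xs)"
  then obtain i where "i < length (take k xs)" "take k xs ! i = xs ! k" by (auto simp: in_set_conv_nth)
  hence "i < k" "xs ! i = xs ! k" by auto
  thus False using assms nth_eq_iff_index_eq by fastforce
qed

lemma set_drop_dist: assumes "distinct xs" shows "set (drop n xs) = set xs - set (take n xs)"
proof -
  have "set xs = set (take n xs) \<union> set (drop n xs)" by (metis append_take_drop_id set_append)
  moreover have "set (take n xs) \<inter> set (drop n xs) = {}" using assms by (metis append_take_drop_id distinct_append)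
  ultimately show ?thesis by blast
qed


lemma half:
  assumes g1: "simple_graph V1 E1" and g2: "simple_graph V2 E2"
    and cl: "is_clique (E1 \<inter> E2) (V1 \<inter> V2)"
    and b1: "based_inf_adm_le V1 E1 X t" and b2: "based_inf_adm_le V2 E2 (V1 \<inter> V2) t"
    and XV: "X \<subseteq> V1"
  shows "based_inf_adm_le (V1 \<union> V2) (E1 \<union> E2) X t"
proof -
  have fin1: "finite V1" and E1s: "E1 \<subseteq> V1 \<times> V1" using g1 unfolding simple_graph_def by auto
  have fin2: "finite V2" and E2s: "E2 \<subseteq> V2 \<times> V2" using g2 unfolding simple_graph_def by auto
  obtain \<sigma>1 where o1: "is_ordering V1 \<sigma>1" and a1: "inf_adm_le V1 E1 \<sigma>1 t"
    and X1: "X = set (take (card X) \<sigma>1)" using b1 unfolding based_inf_adm_le_def by blast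
  obtain \<sigma>2 where o2: "is_ordering V2 \<sigma>2" and a2: "inf_adm_le V2 E2 \<sigma>2 t"
    and C2: "V1 \<inter> V2 = set (take (card (V1 \<inter> V2)) \<sigma>2)" using b2 unfolding based_inf_adm_le_def by blast
  define C where "C = V1 \<inter> V2"
  define c where "c = card C"
  define ys where "ys = drop c \<sigma>2"
  define xs where "xs = \<sigma>1 @ ys"
  have d1: "distinct \<sigma>1" and s1: "set \<sigma>1 = V1" using o1 unfolding is_ordering_def by auto
  have d2: "distinct \<sigma>2" and s2: "set \<sigma>2 = V2" using o2 unfolding is_ordering_def by auto
  have len1: "length \<sigma>1 = card V1" using d1 s1 distinct_card by fastforce
  have len2: "length \<sigma>2 = card V2" using d2 s2 distinct_card by fastforce
  have cle: "c \<le> length \<sigma>2" unfolding c_def C_def len2 using fin2 by (simp add: card_mono)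
  have tC: "set (take c \<sigma>2) = C" using C2 unfolding C_def c_def by (rule sym)
  have sys: "set ys = V2 - V1" unfolding ys_def using set_drop_dist[OF d2, of c] tC s2 C_def by blast
  have dys: "distinct ys" by (simp add: ys_def d2)
  have ord: "is_ordering (V1 \<union> V2) xs" unfolding is_ordering_def xs_def
    using d1 dys s1 sys by auto
  have adm: "inf_adm_le (V1 \<union> V2) (E1 \<union> E2) xs t"
    unfolding inf_adm_le_def
  proof (intro allI impI)
    fix k assume k: "k < length xs"
    show "backconn (V1 \<union> V2) (E1 \<union> E2) xs k \<le> t"
    proof (cases "k < length \<sigma>1")
      case True
      have xk: "xs ! k = \<sigma>1 ! k" using True by (simp add: xs_def nth_append)
      have tk: "take k xs = take k \<sigma>1" using True by (simp add: xs_def)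
      have "backconn (V1 \<union> V2) (E1 \<union> E2) xs k \<le> backconn V1 E1 \<sigma>1 k"
        unfolding backconn_def xk tk
      proof (rule bc_le)
        show "finite (V1 \<union> V2)" "finite V1" using fin1 fin2 by auto
        show "\<sigma>1 ! k \<notin> set (take k \<sigma>1)" using nth_notin_take d1 True by blast
        fix p assume p: "path_to_set (V1 \<union> V2) (E1 \<union> E2) (\<sigma>1 ! k) (set (take k \<sigma>1)) p"
        define p' where "p' = filter (\<lambda>x. x \<in> V1) p"
        have vV1: "\<sigma>1 ! k \<in> V1" using True s1 nth_mem by blast
        have SV1: "set (take k \<sigma>1) \<subseteq> V1" using s1 set_take_subset by metis
        from p have pne: "p \<noteq> []" and hp: "hd p = \<sigma>1 ! k" and dp: "distinct p"
          and sc: "successively (\<lambda>x y. (x,y) \<in> E1 \<union> E2) p"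
          and lp: "last p \<in> set (take k \<sigma>1)" and bp: "\<forall>x\<in>set (butlast p). x \<notin> set (take k \<sigma>1)"
          unfolding path_to_set_alt by auto
        have lV1: "last p \<in> V1" using lp SV1 by blast
        have F: "successively (\<lambda>x y. (x,y)\<in>E1) p' \<and> p' \<noteq> []"
          using filt[OF E1s E2s cl sc dp pne lV1] unfolding p'_def by blast
        obtain q l where pq: "p = q @ [l]" using pne by (cases p rule: rev_exhaust) auto
        have lV1': "l \<in> V1" using lV1 pq by simp
        have p'eq: "p' = filter (\<lambda>x. x \<in> V1) q @ [l]" unfolding p'_def pq using lV1' by simp
        have hp': "hd p' = \<sigma>1 ! k" unfolding p'_def using pne hp vV1 by (cases p) auto
        have "path_to_set V1 E1 (\<sigma>1 ! k) (set (take k \<sigma>1)) p'"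
          unfolding path_to_set_alt
          using F hp' dp lp bp pq p'eq lV1' by (auto simp: p'_def)
        moreover have "set p' \<subseteq> set p" unfolding p'_def by auto
        ultimately show "\<exists>p'. path_to_set V1 E1 (\<sigma>1 ! k) (set (take k \<sigma>1)) p' \<and> set p' \<subseteq> set p" by blast
      qed
      also have "\<dots> \<le> t" using a1 True unfolding inf_adm_le_def by blast
      finally show ?thesis .
    next
      case False
      define j where "j = k - length \<sigma>1"
      have jl: "j < length ys" using k False by (simp add: xs_def j_def)
      have yj: "ys ! j = \<sigma>2 ! (c + j)" using cle by (simp add: ys_def)
      have xk: "xs ! k = \<sigma>2 ! (c + j)" using False yj by (simp add: xs_def nth_append j_def)
      have tk: "take k xs = \<sigma>1 @ take j ys" using False by (simp add: xs_def j_def)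
      have t2: "take (c + j) \<sigma>2 = take c \<sigma>2 @ take j ys" by (simp add: ys_def take_add)
      have cj: "c + j < length \<sigma>2" using jl cle by (simp add: ys_def)
      have vys: "\<sigma>2 ! (c + j) \<in> set ys" using yj jl nth_mem by metis
      have vnot: "\<sigma>2 ! (c + j) \<notin> set (take j ys)" using yj nth_notin_take[OF dys jl] by simp
      have S'eq: "set (take (c + j) \<sigma>2) = C \<union> set (take j ys)" using t2 tC by simp
      have "backconn (V1 \<union> V2) (E1 \<union> E2) xs k \<le> backconn V2 E2 \<sigma>2 (c + j)"
        unfolding backconn_def xk tk
      proof (rule bc_le)
        show "finite (V1 \<union> V2)" "finite V2" using fin1 fin2 by auto
        show "\<sigma>2 ! (c + j) \<notin> set (take (c + j) \<sigma>2)" using nth_notin_take d2 cj by blast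
        fix p assume p: "path_to_set (V1 \<union> V2) (E1 \<union> E2) (\<sigma>2 ! (c + j)) (set (\<sigma>1 @ take j ys)) p"
        from p have pne: "p \<noteq> []" and hp: "hd p = \<sigma>2 ! (c + j)" and dp: "distinct p"
          and sc: "successively (\<lambda>x y. (x,y) \<in> E1 \<union> E2) p"
          and lp: "last p \<in> set (\<sigma>1 @ take j ys)" and bp: "\<forall>x\<in>set (butlast p). x \<notin> set (\<sigma>1 @ take j ys)"
          and sp: "set p \<subseteq> V1 \<union> V2"
          unfolding path_to_set_alt by auto
        have bp1: "\<forall>x\<in>set (butlast p). x \<notin> V1" using bp s1 by auto
        have s2p: "successively (\<lambda>x y. (x,y) \<in> E2) p" using succ_E2[OF E1s sc bp1] .
        have vS: "\<sigma>2 ! (c + j) \<notin> set (\<sigma>1 @ take j ys)" using vys vnot sys s1 by auto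
        obtain x y r where pxy: "p = x # y # r"
        proof (cases p)
          case Nil thus ?thesis using pne by simp
        next
          case (Cons x r')
          show ?thesis
          proof (cases r')
            case Nil thus ?thesis using Cons hp lp vS by simp
          next
            case (Cons y r) thus ?thesis using \<open>p = x # r'\<close> that by simp
          qed
        qed
        have pV2: "set p \<subseteq> V2" using succ_set[OF E2s] s2p pxy by blast
        have lS': "last p \<in> set (take (c + j) \<sigma>2)"
          using lp pV2 pne S'eq s1 C_def by auto
        have S'S: "set (take (c + j) \<sigma>2) \<subseteq> set (\<sigma>1 @ take j ys)" using S'eq s1 C_def by auto
        have "path_to_set V2 E2 (\<sigma>2 ! (c + j)) (set (take (c + j) \<sigma>2)) p"
          unfolding path_to_set_alt using pne hp dp pV2 s2p lS' bp S'S by blast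
        thus "\<exists>p'. path_to_set V2 E2 (\<sigma>2 ! (c + j)) (set (take (c + j) \<sigma>2)) p' \<and> set p' \<subseteq> set p" by blast
      qed
      also have "\<dots> \<le> t" using a2 cj unfolding inf_adm_le_def by blast
      finally show ?thesis .
    qed
  qed
  have "card X \<le> length \<sigma>1" using card_mono[OF fin1 XV] len1 by simp
  hence eq: "take (card X) xs = take (card X) \<sigma>1" by (simp add: xs_def)
  have Xt: "X = set (take (card X) xs)" by (subst eq) (rule X1)
  show ?thesis unfolding based_inf_adm_le_def using ord adm Xt by blast
qed

theorem lemma25:
  fixes V1 V2 :: "'a set" and E1 E2 :: "('a \<times> 'a) set" and t :: nat
  assumes "simple_graph V1 E1" and "simple_graph V2 E2"
    and "is_clique (E1 \<inter> E2) (V1 \<inter> V2)"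
    and "clique_based_inf_adm_le V1 E1 t" and "clique_based_inf_adm_le V2 E2 t"
  shows "clique_based_inf_adm_le (V1 \<union> V2) (E1 \<union> E2) t"
  unfolding clique_based_inf_adm_le_def
proof (intro allI impI)
  fix X assume XV: "X \<subseteq> V1 \<union> V2" and Xc: "is_clique (E1 \<union> E2) X"
  have E1s: "E1 \<subseteq> V1 \<times> V1" using assms(1) unfolding simple_graph_def by auto
  have E2s: "E2 \<subseteq> V2 \<times> V2" using assms(2) unfolding simple_graph_def by auto
  have CC1: "is_clique E1 (V1 \<inter> V2)" "is_clique E2 (V1 \<inter> V2)"
    using assms(3) unfolding is_clique_def by blast+
  have b1C: "based_inf_adm_le V1 E1 (V1 \<inter> V2) t"
    using assms(4) CC1(1) unfolding clique_based_inf_adm_le_def by simp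
  have b2C: "based_inf_adm_le V2 E2 (V1 \<inter> V2) t"
    using assms(5) CC1(2) unfolding clique_based_inf_adm_le_def by simp
  have edge: "(u, w) \<in> E1 \<union> E2" if "u \<in> X" "w \<in> X" "u \<noteq> w" for u w
    using Xc that unfolding is_clique_def by blast
  have "X \<subseteq> V1 \<or> X \<subseteq> V2"
  proof (rule ccontr)
    assume "\<not> (X \<subseteq> V1 \<or> X \<subseteq> V2)"
    then obtain x y where xy: "x \<in> X" "x \<notin> V1" "y \<in> X" "y \<notin> V2" by blast
    have "x \<noteq> y" using XV xy by blast
    hence "(x, y) \<in> E1 \<union> E2" using edge xy by simp
    moreover have "(x, y) \<notin> E1" using E1s xy by blast
    moreover have "(x, y) \<notin> E2" using E2s xy by blast
    ultimately show False by blast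
  qed
  thus "based_inf_adm_le (V1 \<union> V2) (E1 \<union> E2) X t"
  proof
    assume X1: "X \<subseteq> V1"
    have "is_clique E1 X" unfolding is_clique_def
    proof (intro ballI impI)
      fix u w assume uw: "u \<in> X" "w \<in> X" "u \<noteq> w"
      have e: "(u, w) \<in> E1 \<union> E2" using edge uw by simp
      show "(u, w) \<in> E1"
      proof (cases "(u, w) \<in> E1")
        case False
        hence "(u, w) \<in> E2" using e by simp
        hence "u \<in> V2" "w \<in> V2" using E2s by auto
        thus ?thesis using clE[OF assms(3), of u w] uw X1 by auto
      qed
    qed
    hence "based_inf_adm_le V1 E1 X t" using assms(4) X1 unfolding clique_based_inf_adm_le_def by simp
    thus ?thesis using half[OF assms(1,2,3) _ b2C X1] by simp
  next
    assume X2: "X \<subseteq> V2"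
    have "is_clique E2 X" unfolding is_clique_def
    proof (intro ballI impI)
      fix u w assume uw: "u \<in> X" "w \<in> X" "u \<noteq> w"
      have e: "(u, w) \<in> E1 \<union> E2" using edge uw by simp
      show "(u, w) \<in> E2"
      proof (cases "(u, w) \<in> E2")
        case False
        hence "(u, w) \<in> E1" using e by simp
        hence "u \<in> V1" "w \<in> V1" using E1s by auto
        thus ?thesis using clE[OF assms(3), of u w] uw X2 by auto
      qed
    qed
    hence b: "based_inf_adm_le V2 E2 X t" using assms(5) X2 unfolding clique_based_inf_adm_le_def by simp
    have cl': "is_clique (E2 \<inter> E1) (V2 \<inter> V1)" using assms(3) by (simp add: Int_commute)
    have b1C': "based_inf_adm_le V1 E1 (V2 \<inter> V1) t" using b1C by (simp add: Int_commute)
    have "based_inf_adm_le (V2 \<union> V1) (E2 \<union> E1) X t" using half[OF assms(2,1) cl' b b1C' X2] .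
    thus ?thesis by (simp add: Un_commute)
  qed
qed

end
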